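(* Let $k\ge2$, $n\ge1$ be integers, let $\bar{\mathcal{P}}\in\mathbb{R}^{[k,n]}$ be a columnwise-substochastic tensor, $\mathbf{v}\in\mathbb{R}^n$ a stochastic vector and $\alpha\in[0,1)$. Define $\mathcal{P}\in\mathbb{R}^{[k,n]}$ by $p_{ii_2\dots i_k}:=\bar p_{ii_2\dots i_k}+v_i\left(1-\sum_{\ell=1}^n\bar p_{\ell i_2\dots i_k}\right)$. If a nonnegative vector $\mathbf{y}$ solves the MLPPR system $(\mathbf{e}^T\mathbf{y})^{k-2}\mathbf{y}-\alpha\bar{\mathcal{P}}\mathbf{y}^{k-1}=\mathbf{v}$, then $\mathbf{y}$ solves the homogeneous MPR equation $$\mathbf{y}(\mathbf{e}^T\mathbf{y})^{k-2}=\alpha\mathcal{P}\mathbf{y}^{k-1}+(1-\alpha)\mathbf{v}(\mathbf{e}^T\mathbf{y})^{k-1},\quad\mathbf{y}\in\mathbb{R}^n_+.$$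
   Context: For $\mathcal{P}\in\mathbb{R}^{[k,n]}$ (real tensors of order $k$, dimension $n$) and $\mathbf{y}\in\mathbb{R}^n$, $(\mathcal{P}\mathbf{y}^{k-1})_i=\sum_{i_2,\dots,i_k}p_{i i_2\dots i_k}y_{i_2}\cdots y_{i_k}$. $\bar{\mathcal{P}}$ is columnwise-substochastic if its entries are nonnegative and $\sum_{i}\bar p_{i i_2\dots i_k}\le1$ for all $i_2,\dots,i_k$. $\mathbf{e}$ is the all-ones vector; a stochastic vector is nonnegative with entries summing to $1$. *)

theory Defs
  imports Complex_Main
begin

text \<open>A real tensor of order k and dimension n is a function on index lists
  [i_1, ..., i_k] with entries in {0..<n} (0-based indices). Vectors in R^n are
  functions nat => real, only their values on {0..<n} matter.\<close>

definition idx :: "nat \<Rightarrow> nat \<Rightarrow> nat list set" where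
  "idx m n = {js. length js = m \<and> set js \<subseteq> {..<n}}"

definition tensor_apply :: "(nat list \<Rightarrow> real) \<Rightarrow> nat \<Rightarrow> nat \<Rightarrow> (nat \<Rightarrow> real) \<Rightarrow> nat \<Rightarrow> real" where
  "tensor_apply P k n y i = (\<Sum>js\<in>idx (k - 1) n. P (i # js) * prod_list (map y js))"

definition col_substochastic :: "(nat list \<Rightarrow> real) \<Rightarrow> nat \<Rightarrow> nat \<Rightarrow> bool" where
  "col_substochastic P k n \<longleftrightarrow>
     (\<forall>is\<in>idx k n. 0 \<le> P is) \<and>
     (\<forall>js\<in>idx (k - 1) n. (\<Sum>i<n. P (i # js)) \<le> 1)"

definition stochastic_vec :: "(nat \<Rightarrow> real) \<Rightarrow> nat \<Rightarrow> bool" where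
  "stochastic_vec v n \<longleftrightarrow> (\<forall>i<n. 0 \<le> v i) \<and> (\<Sum>i<n. v i) = 1"

definition mpr_tensor :: "(nat list \<Rightarrow> real) \<Rightarrow> (nat \<Rightarrow> real) \<Rightarrow> nat \<Rightarrow> nat list \<Rightarrow> real" where
  "mpr_tensor Pb v n is = Pb is + v (hd is) * (1 - (\<Sum>l<n. Pb (l # tl is)))"

end

theory Submission
  imports Defs
begin

lemma idx_finite: "finite (idx m n)"
proof -
  have "idx m n = {xs. set xs \<subseteq> {..<n} \<and> length xs = m}" unfolding idx_def by auto
  thus ?thesis using finite_lists_length_eq[of "{..<n}" m] by simp
qed

lemma idx_Suc: "idx (Suc m) n = (\<lambda>(j,js). j # js) ` ({..<n} \<times> idx m n)"
  unfolding idx_def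
  by (auto simp: length_Suc_conv image_iff)

lemma sum_idx_prod: "(\<Sum>js\<in>idx m n. prod_list (map (y::nat\<Rightarrow>real) js)) = (\<Sum>j<n. y j) ^ m"
proof (induction m)
  case 0
  have "idx 0 n = {[]}" unfolding idx_def by auto
  thus ?case by simp
next
  case (Suc m)
  have inj: "inj_on (\<lambda>(j,js). j # js) ({..<n} \<times> idx m n)"
    by (auto simp: inj_on_def)
  have "(\<Sum>js\<in>idx (Suc m) n. prod_list (map y js))
      = (\<Sum>p\<in>{..<n} \<times> idx m n. prod_list (map y ((\<lambda>(j,js). j # js) p)))"
    unfolding idx_Suc by (subst sum.reindex[OF inj]) (simp add: comp_def)
  also have "\<dots> = (\<Sum>j<n. \<Sum>js\<in>idx m n. y j * prod_list (map y js))"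
    by (simp add: sum.cartesian_product case_prod_beta)
  also have "\<dots> = (\<Sum>j<n. y j) * (\<Sum>js\<in>idx m n. prod_list (map y js))"
    by (rule sum_product[symmetric])
  finally show ?case using Suc by simp
qed

theorem lemma3p14:
  fixes k n :: nat and Pb :: "nat list \<Rightarrow> real" and v y :: "nat \<Rightarrow> real" and \<alpha> :: real
  assumes "k \<ge> 2" and "n \<ge> 1"
    and "col_substochastic Pb k n"
    and "stochastic_vec v n"
    and "0 \<le> \<alpha>" and "\<alpha> < 1"
    and "\<forall>i<n. 0 \<le> y i"
    and "\<forall>i<n. (\<Sum>j<n. y j) ^ (k - 2) * y i - \<alpha> * tensor_apply Pb k n y i = v i"
  shows "(\<forall>i<n. y i * (\<Sum>j<n. y j) ^ (k - 2) =
            \<alpha> * tensor_apply (mpr_tensor Pb v n) k n y i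
            + (1 - \<alpha>) * v i * (\<Sum>j<n. y j) ^ (k - 1))
         \<and> (\<forall>i<n. 0 \<le> y i)"
proof -
  define S where "S = (\<Sum>j<n. y j)"
  define T where "T i = tensor_apply Pb k n y i" for i
  define ST where "ST = (\<Sum>l<n. T l)"
  have Sk: "S ^ (k - 1) = S * S ^ (k - 2)"
    using assms(1) by (metis Suc_diff_Suc One_nat_def Suc_1 le_less_Suc_eq less_eq_Suc_le
        numeral_2_eq_2 power_Suc diff_Suc_1 Suc_le_lessD Suc_diff_le)
  have sumv: "(\<Sum>i<n. v i) = 1" using assms(4) unfolding stochastic_vec_def by simp
  have "(\<Sum>i<n. v i) = (\<Sum>i<n. S ^ (k - 2) * y i - \<alpha> * T i)"
    using assms(8) unfolding S_def T_def by simp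
  also have "\<dots> = S ^ (k - 2) * S - \<alpha> * ST"
    unfolding ST_def S_def by (simp add: sum_subtractf sum_distrib_left)
  finally have key: "S ^ (k - 1) - \<alpha> * ST = 1" using sumv Sk by (simp add: mult.commute)
  have swap: "ST = (\<Sum>js\<in>idx (k - 1) n. (\<Sum>l<n. Pb (l # js)) * prod_list (map y js))"
    unfolding ST_def T_def tensor_apply_def
    by (subst sum.swap) (simp add: sum_distrib_right)
  have tm: "tensor_apply (mpr_tensor Pb v n) k n y i = T i + v i * (S ^ (k - 1) - ST)" for i
  proof -
    have "tensor_apply (mpr_tensor Pb v n) k n y i
        = (\<Sum>js\<in>idx (k - 1) n. Pb (i # js) * prod_list (map y js)
             + v i * (prod_list (map y js) - (\<Sum>l<n. Pb (l # js)) * prod_list (map y js)))"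
      unfolding tensor_apply_def mpr_tensor_def by (intro sum.cong) (auto simp: algebra_simps)
    also have "\<dots> = T i + v i * (S ^ (k - 1) - ST)"
      unfolding T_def tensor_apply_def swap S_def
      by (simp add: sum.distrib sum_distrib_left[symmetric] sum_subtractf sum_idx_prod)
    finally show ?thesis .
  qed
  show ?thesis
  proof (intro conjI allI impI)
    fix i assume i: "i < n"
    have h: "S ^ (k - 2) * y i - \<alpha> * T i = v i" using assms(8) i unfolding S_def T_def by simp
    have "\<alpha> * (T i + v i * (S ^ (k - 1) - ST)) + (1 - \<alpha>) * v i * S ^ (k - 1)
        = \<alpha> * T i + v i * (S ^ (k - 1) - \<alpha> * ST)" by (simp add: algebra_simps)
    also have "\<dots> = y i * S ^ (k - 2)" using key h by (simp add: algebra_simps)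
    finally show "y i * (\<Sum>j<n. y j) ^ (k - 2) =
            \<alpha> * tensor_apply (mpr_tensor Pb v n) k n y i
            + (1 - \<alpha>) * v i * (\<Sum>j<n. y j) ^ (k - 1)"
      using tm unfolding S_def by simp
  next
    fix i assume "i < n" thus "0 \<le> y i" using assms(7) by simp
  qed
qed

end
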